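(* Let $X,Y,P$ be Banach spaces, $F:X\times P\rightrightarrows Y$ and $G:X\rightrightarrows Y$ set-valued maps and $(\overline{x},\overline{p},\overline{y})\in X\times P\times Y$ with $\overline{y}\in F(\overline{x},\overline{p})$ and $-\overline{y}\in G(\overline{x})$. Let $S:P\rightrightarrows X$, $S(p)=\{x\in X: 0\in F(x,p)+G(x)\}$. Suppose: (i) $(F,G)$ is locally sum-stable around $(\overline{x},\overline{p},\overline{y},-\overline{y})$; (ii) for every $p$ in a neighborhood of $\overline{p}$, $\operatorname{Gr}F(\cdot,p)$ is closed; (iii) $\operatorname{Gr}G$ is closed; (iv) $F$ is Lipschitz-like around $((\overline{x},\overline{p}),\overline{y})$; (v) $G$ is metrically regular around $(\overline{x},-\overline{y})$; (vi) $G$ is inner semicontinuous at $(\overline{x},-\overline{y})$; (vii) $\widehat{\operatorname{lip}}_xF((\overline{x},\overline{p}),\overline{y})\cdot\operatorname{reg}G(\overline{x},-\overline{y})<1$. Then $S$ is Lipschitz-like around $(\overline{p},\overline{x})$ and \[ \operatorname{lip}S(\overline{p},\overline{x})\le\frac{\operatorname{reg}G(\overline{x},-\overline{y})\cdot\widehat{\operatorname{lip}}_pF((\overline{x},\overline{p}),\overline{y})}{1-\widehat{\operatorname{lip}}_xF((\overline{x},\overline{p}),\overline{y})\cdot\operatorname{reg}G(\overline{x},-\overline{y})}. \]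
   Context: $B$ open balls, $\mathbb{D}_Y$ closed unit ball, $d(x,A)=\inf_{a\in A}\|x-a\|$, $d(x,\emptyset)=\infty$; $X\times P$ carries the sum norm. Write $F_p=F(\cdot,p)$. $(F,G)$ is locally sum-stable around $(\overline{x},\overline{p},\overline{y},\overline{z})$ (where $\overline{y}\in F(\overline{x},\overline{p})$, $\overline{z}\in G(\overline{x})$) if for every $\varepsilon>0$ there is $\delta>0$ such that for every $(x,p)\in B(\overline{x},\delta)\times B(\overline{p},\delta)$ and every $w\in(F_p+G)(x)\cap B(\overline{y}+\overline{z},\delta)$ there exist $y\in F_p(x)\cap B(\overline{y},\varepsilon)$ and $z\in G(x)\cap B(\overline{z},\varepsilon)$ with $w=y+z$. A multifunction $T:A\rightrightarrows B$ is Lipschitz-like around $(\overline{a},\overline{b})\in\operatorname{Gr}T$ with constant $L>0$ if there are neighborhoods $U$ of $\overline{a}$, $V$ of $\overline{b}$ with $T(a)\cap V\subset T(u)+L\|a-u\|\mathbb{D}_B$ for all $a,u\in U$ ($\operatorname{lip}T(\overline{a},\overline{b})$ the infimum of such $L$); $T$ is metrically regular around $(\overline{a},\overline{b})$ with constant $L$ if there are neighborhoods $U,V$ with $d(a,T^{-1}(b))\le L\,d(b,T(a))$ for all $(a,b)\in U\times V$ ($\operatorname{reg}T(\overline{a},\overline{b})$ the infimum of such $L$); $T$ is inner semicontinuous at $(\overline{a},\overline{b})$ if for every open $D\ni\overline{b}$ there is a neighborhood $U$ of $\overline{a}$ with $T(a)\cap D\ne\emptyset$ for all $a\in U$. $\widehat{\operatorname{lip}}_xF((\overline{x},\overline{p}),\overline{y})$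 is the infimum of $L>0$ for which there are neighborhoods $U$ of $\overline{x}$, $V$ of $\overline{p}$, $W$ of $\overline{y}$ with $F(x,p)\cap W\subset F(u,p)+L\|x-u\|\mathbb{D}_Y$ for all $x,u\in U$, $p\in V$; $\widehat{\operatorname{lip}}_pF((\overline{x},\overline{p}),\overline{y})$ is the infimum of $L>0$ for which there are such neighborhoods with $F(x,p)\cap W\subset F(x,q)+L\|p-q\|\mathbb{D}_Y$ for all $x\in U$, $p,q\in V$. *)

theory Defs
  imports "HOL-Analysis.Analysis"
begin

definition graph :: "('a \<Rightarrow> 'b set) \<Rightarrow> ('a \<times> 'b) set" where
  "graph T = {(a, b). b \<in> T a}"

definition inverse_mf :: "('a \<Rightarrow> 'b set) \<Rightarrow> 'b \<Rightarrow> 'a set" where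
  "inverse_mf T b = {a. b \<in> T a}"

definition lip_like_const ::
  "('a::real_normed_vector \<Rightarrow> 'b::real_normed_vector set) \<Rightarrow> 'a \<Rightarrow> 'b \<Rightarrow> real \<Rightarrow> bool" where
  "lip_like_const T a0 b0 L \<longleftrightarrow> L > 0 \<and>
     (\<exists>U V. open U \<and> a0 \<in> U \<and> open V \<and> b0 \<in> V \<and>
        (\<forall>a\<in>U. \<forall>u\<in>U. \<forall>y\<in>T a \<inter> V. \<exists>w\<in>T u. norm (y - w) \<le> L * norm (a - u)))"

definition lipschitz_like ::
  "('a::real_normed_vector \<Rightarrow> 'b::real_normed_vector set) \<Rightarrow> 'a \<Rightarrow> 'b \<Rightarrow> bool" where
  "lipschitz_like T a0 b0 \<longleftrightarrow> b0 \<in> T a0 \<and> (\<exists>L. lip_like_const T a0 b0 L)"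

definition lip_mod ::
  "('a::real_normed_vector \<Rightarrow> 'b::real_normed_vector set) \<Rightarrow> 'a \<Rightarrow> 'b \<Rightarrow> real" where
  "lip_mod T a0 b0 = Inf {L. lip_like_const T a0 b0 L}"

(* Lipschitz-like for F : X \<times> P \<rightrightarrows> Y, where X \<times> P carries the SUM norm *)
definition lip_like_const2 ::
  "('x::real_normed_vector \<times> 'p::real_normed_vector \<Rightarrow> 'y::real_normed_vector set)
     \<Rightarrow> 'x \<times> 'p \<Rightarrow> 'y \<Rightarrow> real \<Rightarrow> bool" where
  "lip_like_const2 F a0 b0 L \<longleftrightarrow> L > 0 \<and>
     (\<exists>U V. open U \<and> a0 \<in> U \<and> open V \<and> b0 \<in> V \<and>
        (\<forall>a\<in>U. \<forall>u\<in>U. \<forall>y\<in>F a \<inter> V. \<exists>w\<in>F u.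
            norm (y - w) \<le> L * (norm (fst a - fst u) + norm (snd a - snd u))))"

definition lipschitz_like2 ::
  "('x::real_normed_vector \<times> 'p::real_normed_vector \<Rightarrow> 'y::real_normed_vector set)
     \<Rightarrow> 'x \<times> 'p \<Rightarrow> 'y \<Rightarrow> bool" where
  "lipschitz_like2 F a0 b0 \<longleftrightarrow> b0 \<in> F a0 \<and> (\<exists>L. lip_like_const2 F a0 b0 L)"

(* metric regularity with constant L; d(x,{}) = \<infinity> handled explicitly *)
definition met_reg_const ::
  "('a::real_normed_vector \<Rightarrow> 'b::real_normed_vector set) \<Rightarrow> 'a \<Rightarrow> 'b \<Rightarrow> real \<Rightarrow> bool" where
  "met_reg_const T a0 b0 L \<longleftrightarrow> L > 0 \<and>
     (\<exists>U V. open U \<and> a0 \<in> U \<and> open V \<and> b0 \<in> V \<and>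
        (\<forall>a\<in>U. \<forall>b\<in>V. T a \<noteq> {} \<longrightarrow>
            (inverse_mf T b \<noteq> {} \<and> infdist a (inverse_mf T b) \<le> L * infdist b (T a))))"

definition metrically_regular ::
  "('a::real_normed_vector \<Rightarrow> 'b::real_normed_vector set) \<Rightarrow> 'a \<Rightarrow> 'b \<Rightarrow> bool" where
  "metrically_regular T a0 b0 \<longleftrightarrow> b0 \<in> T a0 \<and> (\<exists>L. met_reg_const T a0 b0 L)"

definition reg_mod ::
  "('a::real_normed_vector \<Rightarrow> 'b::real_normed_vector set) \<Rightarrow> 'a \<Rightarrow> 'b \<Rightarrow> real" where
  "reg_mod T a0 b0 = Inf {L. met_reg_const T a0 b0 L}"

definition inner_semicontinuous ::
  "('a::topological_space \<Rightarrow> 'b::topological_space set) \<Rightarrow> 'a \<Rightarrow> 'b \<Rightarrow> bool" where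
  "inner_semicontinuous T a0 b0 \<longleftrightarrow>
     (\<forall>D. open D \<and> b0 \<in> D \<longrightarrow> (\<exists>U. open U \<and> a0 \<in> U \<and> (\<forall>a\<in>U. T a \<inter> D \<noteq> {})))"

definition lipx_const ::
  "('x::real_normed_vector \<times> 'p::real_normed_vector \<Rightarrow> 'y::real_normed_vector set)
     \<Rightarrow> 'x \<Rightarrow> 'p \<Rightarrow> 'y \<Rightarrow> real \<Rightarrow> bool" where
  "lipx_const F x0 p0 y0 L \<longleftrightarrow> L > 0 \<and>
     (\<exists>U V W. open U \<and> x0 \<in> U \<and> open V \<and> p0 \<in> V \<and> open W \<and> y0 \<in> W \<and>
        (\<forall>x\<in>U. \<forall>u\<in>U. \<forall>p\<in>V. \<forall>y\<in>F (x, p) \<inter> W. \<exists>w\<in>F (u, p). norm (y - w) \<le> L * norm (x - u)))"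

definition lipx_hat ::
  "('x::real_normed_vector \<times> 'p::real_normed_vector \<Rightarrow> 'y::real_normed_vector set)
     \<Rightarrow> 'x \<Rightarrow> 'p \<Rightarrow> 'y \<Rightarrow> real" where
  "lipx_hat F x0 p0 y0 = Inf {L. lipx_const F x0 p0 y0 L}"

definition lipp_const ::
  "('x::real_normed_vector \<times> 'p::real_normed_vector \<Rightarrow> 'y::real_normed_vector set)
     \<Rightarrow> 'x \<Rightarrow> 'p \<Rightarrow> 'y \<Rightarrow> real \<Rightarrow> bool" where
  "lipp_const F x0 p0 y0 L \<longleftrightarrow> L > 0 \<and>
     (\<exists>U V W. open U \<and> x0 \<in> U \<and> open V \<and> p0 \<in> V \<and> open W \<and> y0 \<in> W \<and>
        (\<forall>x\<in>U. \<forall>p\<in>V. \<forall>q\<in>V. \<forall>y\<in>F (x, p) \<inter> W. \<exists>w\<in>F (x, q). norm (y - w) \<le> L * norm (p - q)))"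

definition lipp_hat ::
  "('x::real_normed_vector \<times> 'p::real_normed_vector \<Rightarrow> 'y::real_normed_vector set)
     \<Rightarrow> 'x \<Rightarrow> 'p \<Rightarrow> 'y \<Rightarrow> real" where
  "lipp_hat F x0 p0 y0 = Inf {L. lipp_const F x0 p0 y0 L}"

definition locally_sum_stable ::
  "('x::real_normed_vector \<times> 'p::real_normed_vector \<Rightarrow> 'y::real_normed_vector set)
     \<Rightarrow> ('x \<Rightarrow> 'y set) \<Rightarrow> 'x \<Rightarrow> 'p \<Rightarrow> 'y \<Rightarrow> 'y \<Rightarrow> bool" where
  "locally_sum_stable F G x0 p0 y0 z0 \<longleftrightarrow>
     (\<forall>\<epsilon>>0. \<exists>\<delta>>0. \<forall>x\<in>ball x0 \<delta>. \<forall>p\<in>ball p0 \<delta>.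
        \<forall>w\<in>{y + z |y z. y \<in> F (x, p) \<and> z \<in> G x} \<inter> ball (y0 + z0) \<delta>.
          \<exists>y\<in>F (x, p) \<inter> ball y0 \<epsilon>. \<exists>z\<in>G x \<inter> ball z0 \<epsilon>. w = y + z)"

end

theory Submission
  imports Defs
begin


lemma tri3: "norm (a - c) \<le> norm (a - b) + norm ((b::'a::real_normed_vector) - c)"
  using dist_triangle[of a c b] by (simp add: dist_norm)

lemma geo_convergent:
  fixes X :: "nat \<Rightarrow> 'a::banach"
  assumes b: "\<And>n. norm (X (Suc n) - X n) \<le> C * \<theta> ^ n" and t: "0 \<le> \<theta>" "\<theta> < 1"
  shows "convergent X"
proof -
  have "summable (\<lambda>n. C * \<theta> ^ n)" using t by (intro summable_mult summable_geometric) auto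
  then have "summable (\<lambda>n. norm (X (Suc n) - X n))"
    by (rule summable_comparison_test[rotated]) (use b in auto)
  then have "summable (\<lambda>n. X (Suc n) - X n)" by (rule summable_norm_cancel)
  then obtain s where "(\<lambda>n. X (Suc n) - X n) sums s" by (auto simp: summable_def)
  then have "(\<lambda>n. \<Sum>k<n. X (Suc k) - X k) \<longlonglongrightarrow> s" by (simp add: sums_def)
  then have "(\<lambda>n. X 0 + (\<Sum>k<n. X (Suc k) - X k)) \<longlonglongrightarrow> X 0 + s" by (intro tendsto_intros)
  then have "X \<longlonglongrightarrow> X 0 + s" by (simp add: sum_lessThan_telescope)
  then show ?thesis by (auto simp: convergent_def)
qed

lemma mr_step:
  fixes G :: "'x::real_normed_vector \<Rightarrow> 'y::real_normed_vector set"
  assumes ne: "inverse_mf G (- y1) \<noteq> {}"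
    and id: "infdist xn (inverse_mf G (- y1)) \<le> r * infdist (- y1) (G xn)"
    and yn: "- yn \<in> G xn" and r: "0 < r" "r < r2"
  shows "\<exists>x'. - y1 \<in> G x' \<and> norm (x' - xn) \<le> r2 * norm (y1 - yn)"
proof (cases "y1 = yn")
  case True then show ?thesis using yn by (intro exI[of _ xn]) auto
next
  case False
  then have d: "norm (y1 - yn) > 0" by auto
  have "infdist (- y1) (G xn) \<le> dist (- y1) (- yn)" using yn by (rule infdist_le)
  also have "\<dots> = norm (y1 - yn)" by (simp add: dist_norm norm_minus_commute)
  finally have "infdist xn (inverse_mf G (- y1)) \<le> r * norm (y1 - yn)"
    using id r by (meson order_trans mult_left_mono less_imp_le)
  also have "\<dots> < r2 * norm (y1 - yn)" using d r by simp
  finally have "(INF a\<in>inverse_mf G (- y1). dist xn a) < r2 * norm (y1 - yn)"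
    using ne by (simp add: infdist_notempty)
  then obtain d where "d \<in> dist xn ` inverse_mf G (- y1)" "d < r2 * norm (y1 - yn)"
    using ne cInf_lessD[of "dist xn ` inverse_mf G (- y1)"] by blast
  then obtain a where "a \<in> inverse_mf G (- y1)" "dist xn a < r2 * norm (y1 - yn)" by blast
  then show ?thesis by (intro exI[of _ a]) (auto simp: inverse_mf_def dist_norm norm_minus_commute)
qed



lemma core:
  fixes F :: "'x::banach \<times> 'p::banach \<Rightarrow> 'y::banach set"
    and G :: "'x \<Rightarrow> 'y set"
    and S :: "'p \<Rightarrow> 'x set"
    and xb :: 'x and pb :: 'p and yb :: 'y
  assumes S_def: "\<And>p. S p = {x. 0 \<in> {y + z |y z. y \<in> F (x, p) \<and> z \<in> G x}}"
    and i: "locally_sum_stable F G xb pb yb (- yb)"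
    and ii: "\<exists>V. open V \<and> pb \<in> V \<and> (\<forall>p\<in>V. closed (graph (\<lambda>x. F (x, p))))"
    and iii: "closed (graph G)"
    and LX: "lipx_const F xb pb yb lx"
    and LP: "lipp_const F xb pb yb lp"
    and MR: "met_reg_const G xb (- yb) r"
    and rr: "r < r2" and th1: "lx * r2 < 1"
  shows "lip_like_const S pb xb (r2 * lp / (1 - lx * r2))"
proof -
  obtain Ux Vx Wx where lx0: "lx > 0" and oUx: "open Ux" "xb \<in> Ux" and oVx: "open Vx" "pb \<in> Vx"
    and oWx: "open Wx" "yb \<in> Wx"
    and PX: "\<forall>x\<in>Ux. \<forall>u\<in>Ux. \<forall>p\<in>Vx. \<forall>y\<in>F (x, p) \<inter> Wx. \<exists>w\<in>F (u, p). norm (y - w) \<le> lx * norm (x - u)"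
    using LX unfolding lipx_const_def by (elim conjE exE) blast
  obtain Up Vp Wp where lp0: "lp > 0" and oUp: "open Up" "xb \<in> Up" and oVp: "open Vp" "pb \<in> Vp"
    and oWp: "open Wp" "yb \<in> Wp"
    and PP: "\<forall>x\<in>Up. \<forall>p\<in>Vp. \<forall>q\<in>Vp. \<forall>y\<in>F (x, p) \<inter> Wp. \<exists>w\<in>F (x, q). norm (y - w) \<le> lp * norm (p - q)"
    using LP unfolding lipp_const_def by (elim conjE exE) blast
  obtain UG VG where r0: "r > 0" and oUG: "open UG" "xb \<in> UG" and oVG: "open VG" "- yb \<in> VG"
    and PG: "\<forall>a\<in>UG. \<forall>b\<in>VG. G a \<noteq> {} \<longrightarrow>
              (inverse_mf G b \<noteq> {} \<and> infdist a (inverse_mf G b) \<le> r * infdist b (G a))"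
    using MR unfolding met_reg_const_def by (elim conjE exE) blast
  obtain Vc where oVc: "open Vc" "pb \<in> Vc" and PC: "\<And>p. p \<in> Vc \<Longrightarrow> closed (graph (\<lambda>x. F (x, p)))"
    using ii by blast
  have r20: "r2 > 0" using r0 rr by simp
  define \<theta> where "\<theta> = lx * r2"
  have t0: "0 \<le> \<theta>" "\<theta> < 1" using lx0 r20 th1 by (auto simp: \<theta>_def)
  define \<kappa> where "\<kappa> = r2 * lp / (1 - \<theta>)"
  have k0: "\<kappa> > 0" using t0 r20 lp0 by (simp add: \<kappa>_def)
  have "open (Ux \<inter> Up \<inter> UG)" "xb \<in> Ux \<inter> Up \<inter> UG" using oUx oUp oUG by auto
  then obtain a where a0: "a > 0" and aB: "ball xb a \<subseteq> Ux \<inter> Up \<inter> UG"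
    using open_contains_ball by blast
  have "open (Wx \<inter> Wp)" "yb \<in> Wx \<inter> Wp" using oWx oWp by auto
  then obtain b1 where b10: "b1 > 0" and b1B: "ball yb b1 \<subseteq> Wx \<inter> Wp"
    using open_contains_ball by blast
  obtain b2 where b20: "b2 > 0" and b2B: "ball (- yb) b2 \<subseteq> VG"
    using oVG open_contains_ball by blast
  define b where "b = min b1 b2"
  have b0: "b > 0" using b10 b20 by (simp add: b_def)
  have bB: "\<And>y. norm (y - yb) < b \<Longrightarrow> y \<in> Wx \<and> y \<in> Wp \<and> - y \<in> VG"
  proof -
    fix y assume "norm (y - yb) < b"
    then have "dist yb y < b1" "dist (- yb) (- y) < b2"
      by (auto simp: b_def dist_norm norm_minus_commute)
    then show "y \<in> Wx \<and> y \<in> Wp \<and> - y \<in> VG" using b1B b2B by auto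
  qed
  have "open (Vx \<inter> Vp \<inter> Vc)" "pb \<in> Vx \<inter> Vp \<inter> Vc" using oVx oVp oVc by auto
  then obtain c where c0: "c > 0" and cB: "ball pb c \<subseteq> Vx \<inter> Vp \<inter> Vc"
    using open_contains_ball by blast
  obtain \<delta> where d0: "\<delta> > 0" and SS: "\<forall>x\<in>ball xb \<delta>. \<forall>p\<in>ball pb \<delta>.
      \<forall>w\<in>{y + z |y z. y \<in> F (x, p) \<and> z \<in> G x} \<inter> ball (yb + - yb) \<delta>.
      \<exists>y\<in>F (x, p) \<inter> ball yb (b/2). \<exists>z\<in>G x \<inter> ball (- yb) (b/2). w = y + z"
    using i[unfolded locally_sum_stable_def, rule_format, of "b/2"] b0 by auto
  define \<rho> where "\<rho> = min (min \<delta> c) (min (a / (2 * (1 + 2 * \<kappa>))) (b * (1 - \<theta>) / (4 * lp)))"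
  have rho0: "\<rho> > 0" using d0 c0 a0 k0 b0 t0 lp0 by (simp add: \<rho>_def)
  have rho1: "\<rho> \<le> \<delta>" "\<rho> \<le> c" "\<rho> \<le> a / (2 * (1 + 2 * \<kappa>))" "\<rho> \<le> b * (1 - \<theta>) / (4 * lp)"
    by (auto simp: \<rho>_def)
  have rho2: "\<rho> * (1 + 2 * \<kappa>) < a"
  proof -
    have "\<rho> * (1 + 2 * \<kappa>) \<le> a / 2" using rho1(3) k0 by (simp add: field_simps)
    then show ?thesis using a0 by simp
  qed
  have rho3: "2 * \<rho> * lp / (1 - \<theta>) \<le> b / 2"
    using rho1(4) t0 lp0 by (simp add: field_simps)
  have main: "\<exists>w\<in>S q. norm (x - w) \<le> \<kappa> * norm (p - q)"
    if pU: "p \<in> ball pb \<rho>" and qU: "q \<in> ball pb \<rho>" and xS: "x \<in> S p" and xV: "x \<in> ball xb \<rho>"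
    for p q x
  proof -
    have pq: "norm (p - q) < 2 * \<rho>"
    proof -
      have "dist p q \<le> dist pb p + dist pb q" by (metis dist_commute dist_triangle)
      then show ?thesis using pU qU by (simp add: dist_norm)
    qed
    have "0 \<in> {y + z |y z. y \<in> F (x, p) \<and> z \<in> G x}" using xS S_def by auto
    moreover have "x \<in> ball xb \<delta>" "p \<in> ball pb \<delta>" using xV pU rho1 by auto
    moreover have "(0::'y) \<in> ball (yb + - yb) \<delta>" using d0 by simp
    ultimately have "\<exists>y\<in>F (x, p) \<inter> ball yb (b/2). \<exists>z\<in>G x \<inter> ball (- yb) (b/2). 0 = y + z"
      using SS[rule_format, of x p 0] by blast
    then obtain y0 z0 where y0: "y0 \<in> F (x, p)" "dist yb y0 < b/2" and z0: "z0 \<in> G x" and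
      yz: "0 = y0 + z0" by auto
    have z0e: "z0 = - y0" using yz by (simp add: eq_neg_iff_add_eq_0 add.commute)
    have "\<rho> \<le> \<rho> * (1 + 2 * \<kappa>)" using k0 rho0 by simp
    then have xa: "x \<in> ball xb a" using xV rho2 by simp
    have xUp: "x \<in> Up" using xa aB by auto
    have pV: "p \<in> Vp" "q \<in> Vp" using pU qU rho1 cB by auto
    have y0b: "norm (y0 - yb) < b / 2" using y0(2) by (simp add: dist_norm norm_minus_commute)
    have "y0 \<in> Wp" using bB[of y0] y0b b0 by simp
    then obtain y1 where y1: "y1 \<in> F (x, q)" "norm (y0 - y1) \<le> lp * norm (p - q)"
      using PP xUp pV y0(1) by blast
    define d0 where "d0 = lp * norm (p - q)"
    have dd0: "d0 \<ge> 0" using lp0 by (simp add: d0_def)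
    have d0b: "d0 / (1 - \<theta>) \<le> b / 2"
    proof -
      have "d0 \<le> 2 * \<rho> * lp" using pq lp0 by (simp add: d0_def mult.commute)
      then have "d0 / (1 - \<theta>) \<le> 2 * \<rho> * lp / (1 - \<theta>)" using t0 by (simp add: divide_right_mono)
      then show ?thesis using rho3 by linarith
    qed
    have kd: "r2 * d0 / (1 - \<theta>) = \<kappa> * norm (p - q)" by (simp add: \<kappa>_def d0_def)
    have kdb: "r2 * d0 / (1 - \<theta>) \<le> 2 * \<rho> * \<kappa>"
      using kd pq k0 by simp
    define gs where "gs n = (\<Sum>k<n. \<theta> ^ k)" for n
    have gsb: "gs n \<le> 1 / (1 - \<theta>)" for n
    proof -
      have "gs n = (1 - \<theta> ^ n) / (1 - \<theta>)" using t0 by (simp add: gs_def sum_gp_strict)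
      also have "\<dots> \<le> 1 / (1 - \<theta>)" using t0 by (simp add: divide_right_mono)
      finally show ?thesis .
    qed
    have gsS: "gs (Suc n) = gs n + \<theta> ^ n" for n by (simp add: gs_def)
    have gs0: "gs n \<ge> 0" for n using t0 by (simp add: gs_def sum_nonneg)
    have xin: "z \<in> ball xb a" if "norm (z - x) \<le> r2 * d0 * gs n" for z n
    proof -
      have "r2 * d0 * gs n \<le> r2 * d0 * (1 / (1 - \<theta>))"
        using mult_left_mono[OF gsb[of n], of "r2 * d0"] r20 dd0 by simp
      then have "norm (z - x) \<le> 2 * \<rho> * \<kappa>" using that kdb by simp
      moreover have "norm (x - xb) < \<rho>" using xV by (simp add: dist_norm norm_minus_commute)
      moreover have "norm (z - xb) \<le> norm (z - x) + norm (x - xb)" by (rule tri3)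
      ultimately have "norm (z - xb) < \<rho> * (1 + 2 * \<kappa>)" by (simp add: algebra_simps)
      then show ?thesis using rho2 by (simp add: dist_norm norm_minus_commute)
    qed
    have yin: "norm (z - yb) < b" if "norm (z - y0) \<le> d0 * gs n" for z n
    proof -
      have "d0 * gs n \<le> d0 / (1 - \<theta>)" using mult_left_mono[OF gsb[of n], of "d0"] dd0 by simp
      then have "norm (z - y0) \<le> b / 2" using that d0b by linarith
      moreover have "norm (z - yb) \<le> norm (z - y0) + norm (y0 - yb)" by (rule tri3)
      ultimately show ?thesis using y0b by simp
    qed
    define P where "P n s \<longleftrightarrow> (case s of (xn, yn, yn1) \<Rightarrow>
        - yn \<in> G xn \<and> yn1 \<in> F (xn, q) \<and> norm (yn1 - yn) \<le> \<theta> ^ n * d0 \<and>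
        norm (xn - x) \<le> r2 * d0 * gs n \<and> norm (yn - y0) \<le> d0 * gs n)" for n s
    define Q where "Q n s s' \<longleftrightarrow> norm (fst s' - fst s) \<le> r2 * (\<theta> ^ n * d0) \<and>
        fst (snd s') = snd (snd s)" for n :: nat and s s' :: "'x \<times> 'y \<times> 'y"
    have P0: "P 0 (x, y0, y1)" using z0 z0e y1 by (simp add: P_def gs_def d0_def norm_minus_commute)
    have Pstep: "\<exists>s'. P (Suc n) s' \<and> Q n s s'" if Pn: "P n s" for n s
    proof -
      obtain xn yn yn1 where s: "s = (xn, yn, yn1)" by (cases s) auto
      have A: "- yn \<in> G xn" "yn1 \<in> F (xn, q)" "norm (yn1 - yn) \<le> \<theta> ^ n * d0"
        "norm (xn - x) \<le> r2 * d0 * gs n" "norm (yn - y0) \<le> d0 * gs n"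
        using Pn by (auto simp: P_def s)
      have xna: "xn \<in> ball xb a" using xin A(4) by blast
      have yn1y0: "norm (yn1 - y0) \<le> d0 * gs (Suc n)"
      proof -
        have "norm (yn1 - y0) \<le> norm (yn1 - yn) + norm (yn - y0)" by (rule tri3)
        then show ?thesis using A(3,5) by (simp add: gsS algebra_simps)
      qed
      have yn1b: "norm (yn1 - yb) < b" using yin yn1y0 by blast
      have "yn1 \<in> Wx" "- yn1 \<in> VG" using bB yn1b by auto
      moreover have "xn \<in> UG" using xna aB by auto
      moreover have "G xn \<noteq> {}" using A(1) by auto
      ultimately have "inverse_mf G (- yn1) \<noteq> {} \<and> infdist xn (inverse_mf G (- yn1)) \<le> r * infdist (- yn1) (G xn)"
        using PG by blast
      then obtain x' where x': "- yn1 \<in> G x'" "norm (x' - xn) \<le> r2 * norm (yn1 - yn)"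
        using mr_step[of G yn1 xn r yn r2] A(1) r0 rr by blast
      have x'n: "norm (x' - xn) \<le> r2 * (\<theta> ^ n * d0)"
        using x'(2) A(3) r20 by (meson order_trans mult_left_mono less_imp_le)
      have x'x: "norm (x' - x) \<le> r2 * d0 * gs (Suc n)"
      proof -
        have "norm (x' - x) \<le> norm (x' - xn) + norm (xn - x)" by (rule tri3)
        then show ?thesis using x'n A(4) by (simp add: gsS algebra_simps)
      qed
      have x'a: "x' \<in> ball xb a" using xin x'x by blast
      have "xn \<in> Ux" "x' \<in> Ux" using xna x'a aB by auto
      moreover have "q \<in> Vx" using qU rho1 cB by auto
      ultimately obtain y2 where y2: "y2 \<in> F (x', q)" "norm (yn1 - y2) \<le> lx * norm (xn - x')"
        using PX A(2) \<open>yn1 \<in> Wx\<close> by blast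
      have "lx * norm (xn - x') \<le> lx * (r2 * (\<theta> ^ n * d0))"
        using x'n lx0 by (simp add: norm_minus_commute mult_left_mono)
      also have "\<dots> = \<theta> ^ Suc n * d0" by (simp add: \<theta>_def)
      finally have y2n: "norm (y2 - yn1) \<le> \<theta> ^ Suc n * d0" using y2(2) by (simp add: norm_minus_commute)
      have "P (Suc n) (x', yn1, y2)" using x'(1) y2(1) y2n x'x yn1y0 by (simp add: P_def)
      moreover have "Q n s (x', yn1, y2)" using x'n by (simp add: Q_def s)
      ultimately show ?thesis by blast
    qed
    obtain f where f: "\<And>n. P n (f n)" "\<And>n. Q n (f n) (f (Suc n))"
      using dependent_nat_choice[of P Q, OF exI[of _ "(x, y0, y1)"], OF P0 Pstep] by blast
    define xs where "xs n = fst (f n)" for n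
    define ys where "ys n = fst (snd (f n))" for n
    have fa: "- ys n \<in> G (xs n)" "ys (Suc n) \<in> F (xs n, q)" "norm (ys (Suc n) - ys n) \<le> d0 * \<theta> ^ n"
      "norm (xs n - x) \<le> r2 * d0 * gs n" "norm (xs (Suc n) - xs n) \<le> (r2 * d0) * \<theta> ^ n" for n
    proof -
      obtain a1 a2 a3 where fn: "f n = (a1, a2, a3)" by (cases "f n") auto
      have ys1: "ys (Suc n) = a3" using f(2)[of n] by (simp add: Q_def ys_def fn)
      show "- ys n \<in> G (xs n)" "ys (Suc n) \<in> F (xs n, q)" "norm (ys (Suc n) - ys n) \<le> d0 * \<theta> ^ n"
        "norm (xs n - x) \<le> r2 * d0 * gs n"
        using f(1)[of n] ys1 by (auto simp: P_def fn xs_def ys_def mult.commute)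
      show "norm (xs (Suc n) - xs n) \<le> (r2 * d0) * \<theta> ^ n"
        using f(2)[of n] by (simp add: Q_def xs_def algebra_simps)
    qed
    have "convergent xs" by (rule geo_convergent[OF fa(5) t0])
    then obtain xst where xl: "xs \<longlonglongrightarrow> xst" by (auto simp: convergent_def)
    have "convergent ys" by (rule geo_convergent[OF fa(3) t0])
    then obtain yst where yl: "ys \<longlonglongrightarrow> yst" by (auto simp: convergent_def)
    have "q \<in> Vc" using qU rho1 cB by auto
    then have cF: "closed (graph (\<lambda>x. F (x, q)))" by (rule PC)
    have L1: "(\<lambda>n. (xs n, ys (Suc n))) \<longlonglongrightarrow> (xst, yst)"
      using xl LIMSEQ_Suc[OF yl] by (rule tendsto_Pair)
    have "(xst, yst) \<in> graph (\<lambda>x. F (x, q))"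
      by (rule closed_sequentially[OF cF _ L1]) (use fa(2) in \<open>auto simp: graph_def\<close>)
    then have F1: "yst \<in> F (xst, q)" by (simp add: graph_def)
    have L2: "(\<lambda>n. (xs n, - ys n)) \<longlonglongrightarrow> (xst, - yst)"
      using xl yl by (intro tendsto_intros)
    have "(xst, - yst) \<in> graph G"
      by (rule closed_sequentially[OF iii _ L2]) (use fa(1) in \<open>auto simp: graph_def\<close>)
    then have G1: "- yst \<in> G xst" by (simp add: graph_def)
    have "xst \<in> S q" unfolding S_def using F1 G1 by force
    moreover have "norm (x - xst) \<le> \<kappa> * norm (p - q)"
    proof -
      have "(\<lambda>n. norm (xs n - x)) \<longlonglongrightarrow> norm (xst - x)" using xl by (intro tendsto_intros)
      moreover have "\<forall>n\<ge>0. norm (xs n - x) \<le> r2 * d0 / (1 - \<theta>)"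
      proof safe
        fix n
        have "r2 * d0 * gs n \<le> r2 * d0 * (1 / (1 - \<theta>))"
          using mult_left_mono[OF gsb[of n], of "r2 * d0"] r20 dd0 by simp
        then show "norm (xs n - x) \<le> r2 * d0 / (1 - \<theta>)" using fa(4)[of n] by simp
      qed
      ultimately have "norm (xst - x) \<le> r2 * d0 / (1 - \<theta>)" by (intro LIMSEQ_le_const2) auto
      then show ?thesis using kd by (simp add: norm_minus_commute)
    qed
    ultimately show ?thesis by blast
  qed
  show ?thesis unfolding lip_like_const_def
  proof (intro conjI exI)
    show "r2 * lp / (1 - lx * r2) > 0" using k0 by (simp add: \<kappa>_def \<theta>_def)
    show "open (ball pb \<rho>)" "pb \<in> ball pb \<rho>" "open (ball xb \<rho>)" "xb \<in> ball xb \<rho>"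
      using rho0 by auto
    show "\<forall>a\<in>ball pb \<rho>. \<forall>u\<in>ball pb \<rho>. \<forall>y\<in>S a \<inter> ball xb \<rho>. \<exists>w\<in>S u.
        norm (y - w) \<le> r2 * lp / (1 - lx * r2) * norm (a - u)"
      using main unfolding \<kappa>_def \<theta>_def by blast
  qed
qed



lemma lip2_nonempty:
  fixes F :: "'x::real_normed_vector \<times> 'p::real_normed_vector \<Rightarrow> 'y::real_normed_vector set"
  assumes "lipschitz_like2 F (xb, pb) yb"
  shows "\<exists>L. lipx_const F xb pb yb L" "\<exists>L. lipp_const F xb pb yb L"
proof -
  obtain L U V where L0: "L > 0" and oU: "open U" "(xb, pb) \<in> U" and oV: "open V" "yb \<in> V"
    and P: "\<forall>a\<in>U. \<forall>u\<in>U. \<forall>y\<in>F a \<inter> V. \<exists>w\<in>F u.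
            norm (y - w) \<le> L * (norm (fst a - fst u) + norm (snd a - snd u))"
    using assms unfolding lipschitz_like2_def lip_like_const2_def by (elim conjE exE) blast
  obtain A B where AB: "open A" "open B" "(xb, pb) \<in> A \<times> B" "A \<times> B \<subseteq> U"
    using open_prod_elim[OF oU] by blast
  have "lipx_const F xb pb yb L" unfolding lipx_const_def
  proof (intro conjI exI[of _ A] exI[of _ B] exI[of _ V])
    show "\<forall>x\<in>A. \<forall>u\<in>A. \<forall>p\<in>B. \<forall>y\<in>F (x, p) \<inter> V. \<exists>w\<in>F (u, p). norm (y - w) \<le> L * norm (x - u)"
    proof (intro ballI)
      fix x u p y assume "x \<in> A" "u \<in> A" "p \<in> B" "y \<in> F (x, p) \<inter> V"
      then have "(x, p) \<in> U" "(u, p) \<in> U" using AB by auto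
      then show "\<exists>w\<in>F (u, p). norm (y - w) \<le> L * norm (x - u)"
        using P \<open>y \<in> F (x, p) \<inter> V\<close> by fastforce
    qed
  qed (use L0 AB oV in auto)
  then show "\<exists>L. lipx_const F xb pb yb L" by blast
  have "lipp_const F xb pb yb L" unfolding lipp_const_def
  proof (intro conjI exI[of _ A] exI[of _ B] exI[of _ V])
    show "\<forall>x\<in>A. \<forall>p\<in>B. \<forall>q\<in>B. \<forall>y\<in>F (x, p) \<inter> V. \<exists>w\<in>F (x, q). norm (y - w) \<le> L * norm (p - q)"
    proof (intro ballI)
      fix x p q y assume "x \<in> A" "p \<in> B" "q \<in> B" "y \<in> F (x, p) \<inter> V"
      then have "(x, p) \<in> U" "(x, q) \<in> U" using AB by auto
      then show "\<exists>w\<in>F (x, q). norm (y - w) \<le> L * norm (p - q)"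
        using P \<open>y \<in> F (x, p) \<inter> V\<close> by fastforce
    qed
  qed (use L0 AB oV in auto)
  then show "\<exists>L. lipp_const F xb pb yb L" by blast
qed

theorem theorem4p13:
  fixes F :: "'x::banach \<times> 'p::banach \<Rightarrow> 'y::banach set"
    and G :: "'x \<Rightarrow> 'y set"
    and S :: "'p \<Rightarrow> 'x set"
    and xb :: 'x and pb :: 'p and yb :: 'y
  assumes yF: "yb \<in> F (xb, pb)"
    and yG: "- yb \<in> G xb"
    and S_def: "\<And>p. S p = {x. 0 \<in> {y + z |y z. y \<in> F (x, p) \<and> z \<in> G x}}"
    and i: "locally_sum_stable F G xb pb yb (- yb)"
    and ii: "\<exists>V. open V \<and> pb \<in> V \<and> (\<forall>p\<in>V. closed (graph (\<lambda>x. F (x, p))))"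
    and iii: "closed (graph G)"
    and iv: "lipschitz_like2 F (xb, pb) yb"
    and v: "metrically_regular G xb (- yb)"
    and vi: "inner_semicontinuous G xb (- yb)"
    and vii: "lipx_hat F xb pb yb * reg_mod G xb (- yb) < 1"
  shows "lipschitz_like S pb xb \<and>
         lip_mod S pb xb \<le> reg_mod G xb (- yb) * lipp_hat F xb pb yb
                             / (1 - lipx_hat F xb pb yb * reg_mod G xb (- yb))"
proof -
  define LX where "LX = {L. lipx_const F xb pb yb L}"
  define LP where "LP = {L. lipp_const F xb pb yb L}"
  define RG where "RG = {L. met_reg_const G xb (- yb) L}"
  define LS where "LS = {L. lip_like_const S pb xb L}"
  define Lx where "Lx = lipx_hat F xb pb yb"
  define Lp where "Lp = lipp_hat F xb pb yb"
  define R where "R = reg_mod G xb (- yb)"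
  have LXne: "LX \<noteq> {}" and LPne: "LP \<noteq> {}" using lip2_nonempty[OF iv] by (auto simp: LX_def LP_def)
  have RGne: "RG \<noteq> {}" using v by (auto simp: RG_def metrically_regular_def)
  have LXp: "\<And>L. L \<in> LX \<Longrightarrow> L > 0" by (auto simp: LX_def lipx_const_def)
  have LPp: "\<And>L. L \<in> LP \<Longrightarrow> L > 0" by (auto simp: LP_def lipp_const_def)
  have RGp: "\<And>L. L \<in> RG \<Longrightarrow> L > 0" by (auto simp: RG_def met_reg_const_def)
  have LSp: "\<And>L. L \<in> LS \<Longrightarrow> L > 0" by (auto simp: LS_def lip_like_const_def)
  have Lx0: "Lx \<ge> 0" unfolding Lx_def lipx_hat_def LX_def[symmetric]
    using LXne LXp by (meson cInf_greatest less_imp_le)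
  have Lp0: "Lp \<ge> 0" unfolding Lp_def lipp_hat_def LP_def[symmetric]
    using LPne LPp by (meson cInf_greatest less_imp_le)
  have R0: "R \<ge> 0" unfolding R_def reg_mod_def RG_def[symmetric]
    using RGne RGp by (meson cInf_greatest less_imp_le)
  have th: "Lx * R < 1" using vii by (simp add: Lx_def R_def)
  define bnd where "bnd = R * Lp / (1 - Lx * R)"
  have key: "\<exists>L\<in>LS. L \<le> bnd + \<eta>" if eta: "\<eta> > 0" for \<eta>
  proof -
    have "((\<lambda>t. (R + 2*t) * (Lp + t) / (1 - (Lx + t) * (R + 2*t))) \<longlongrightarrow>
        (R + 2*0) * (Lp + 0) / (1 - (Lx + 0) * (R + 2*0))) (at_right 0)"
      using th by (intro tendsto_intros) auto
    then have "((\<lambda>t. (R + 2*t) * (Lp + t) / (1 - (Lx + t) * (R + 2*t))) \<longlongrightarrow> bnd) (at_right 0)"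
      by (simp add: bnd_def)
    then have e1: "eventually (\<lambda>t. (R + 2*t) * (Lp + t) / (1 - (Lx + t) * (R + 2*t)) < bnd + \<eta>) (at_right 0)"
      using eta by (intro order_tendstoD) auto
    have "((\<lambda>t. (Lx + t) * (R + 2*t)) \<longlongrightarrow> (Lx + 0) * (R + 2*0)) (at_right (0::real))"
      by (intro tendsto_intros)
    then have e2: "eventually (\<lambda>t. (Lx + t) * (R + 2*t) < 1) (at_right 0)"
      using th by (intro order_tendstoD) auto
    have e3: "eventually (\<lambda>t::real. t > 0) (at_right 0)" by (simp add: eventually_at_right_less)
    obtain t where t: "(R + 2*t) * (Lp + t) / (1 - (Lx + t) * (R + 2*t)) < bnd + \<eta>"
      "(Lx + t) * (R + 2*t) < 1" "t > 0"
      using eventually_happens'[OF _ eventually_conj[OF e1 eventually_conj[OF e2 e3]]] by auto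
    obtain lx where lx: "lx \<in> LX" "lx < Lx + t"
      using cInf_lessD[OF LXne, of "Lx + t"] t(3) by (auto simp: Lx_def lipx_hat_def LX_def)
    obtain lp where lp: "lp \<in> LP" "lp < Lp + t"
      using cInf_lessD[OF LPne, of "Lp + t"] t(3) by (auto simp: Lp_def lipp_hat_def LP_def)
    obtain r where r: "r \<in> RG" "r < R + t"
      using cInf_lessD[OF RGne, of "R + t"] t(3) by (auto simp: R_def reg_mod_def RG_def)
    define r2 where "r2 = R + 2 * t"
    have rr: "r < r2" using r t(3) by (simp add: r2_def)
    have r20: "r2 > 0" using R0 t(3) by (simp add: r2_def)
    have lx0: "lx > 0" "lp > 0" using LXp LPp lx lp by auto
    have "lx * r2 \<le> (Lx + t) * r2" using lx r20 by (simp add: mult_right_mono)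
    then have lr: "lx * r2 < 1" using t(2) by (simp add: r2_def)
    have "lip_like_const S pb xb (r2 * lp / (1 - lx * r2))"
      by (rule core[OF S_def i ii iii _ _ _ rr lr]) (use lx lp r in \<open>auto simp: LX_def LP_def RG_def\<close>)
    moreover have "r2 * lp / (1 - lx * r2) \<le> (R + 2*t) * (Lp + t) / (1 - (Lx + t) * (R + 2*t))"
    proof (rule frac_le)
      show "0 \<le> (R + 2*t) * (Lp + t)" using R0 Lp0 t(3) by simp
      show "r2 * lp \<le> (R + 2*t) * (Lp + t)" using r20 lp by (simp add: r2_def mult_left_mono)
      show "0 < 1 - (Lx + t) * (R + 2*t)" using t(2) by simp
      show "1 - (Lx + t) * (R + 2 * t) \<le> 1 - lx * r2" using \<open>lx * r2 \<le> (Lx + t) * r2\<close> by (simp add: r2_def)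
    qed
    ultimately show ?thesis using t(1) by (auto simp: LS_def)
  qed
  have "xb \<in> S pb" using yF yG S_def by force
  moreover obtain L1 where "L1 \<in> LS" using key[of 1] by auto
  ultimately have "lipschitz_like S pb xb" by (auto simp: lipschitz_like_def LS_def)
  moreover have "lip_mod S pb xb \<le> bnd"
  proof (rule field_le_epsilon)
    fix e :: real assume "0 < e"
    then obtain L where L: "L \<in> LS" "L \<le> bnd + e" using key by blast
    have "bdd_below LS" using LSp by (meson bdd_belowI less_imp_le)
    then have "Inf LS \<le> L" using L(1) by (rule cInf_lower[rotated])
    then show "lip_mod S pb xb \<le> bnd + e" using L(2) by (simp add: lip_mod_def LS_def)
  qed
  ultimately show ?thesis by (simp add: bnd_def R_def Lp_def Lx_def)
qed

end
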